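(* Let $n\ge2$. For $a_{ij}\in\{\pm1\}$ ($1\le i<j\le n$) and $b_1,\dots,b_n\in\{\pm1\}$, define $$\mathcal B_{Zn}=\sum_{1\le i<j\le n}a_{ij}(b_i-b_j).$$ Then the maximum of $\mathcal B_{Zn}$ over all $\pm1$ assignments equals $\lfloor n^2/2\rfloor$. Consequently, for any local hidden variable model, $\langle\mathcal B_{Zn}\rangle_{\mathrm{LHV}}\le\lfloor n^2/2\rfloor$.
   Context: A local hidden variable model assigns, for a variable $\lambda$ distributed with a probability density $q$, outcomes $A(\lambda,i)\in\{\pm1\}$ to each of Alice's settings $i$ and $B(\lambda,j)\in\{\pm1\}$ to each of Bob's settings $j$; the correlation is $\langle\alpha_i\beta_j\rangle_{\mathrm{LHV}}=\int q(\lambda)A(\lambda,i)B(\lambda,j)\,d\lambda$, and $\langle\mathcal B\rangle_{\mathrm{LHV}}$ is obtained from the bilinear expression $\mathcal B$ by replacing each product $a_ib_j$ with $\langle\alpha_i\beta_j\rangle_{\mathrm{LHV}}$. $\lfloor x\rfloor$ is the largest integer $\le x$. *)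

theory Defs
  imports "HOL-Analysis.Analysis"
begin

text \<open>Bell expression B_Zn for a +-1 assignment: Alice's settings are indexed by pairs
  (i,j) with 1 <= i < j <= n, Bob's settings by 1..n.\<close>
definition BZ :: "nat \<Rightarrow> (nat \<Rightarrow> nat \<Rightarrow> int) \<Rightarrow> (nat \<Rightarrow> int) \<Rightarrow> int" where
  "BZ n a b = (\<Sum>i=1..n. \<Sum>j=i+1..n. a i j * (b i - b j))"

definition pm1_assignments :: "nat \<Rightarrow> ((nat \<Rightarrow> nat \<Rightarrow> int) \<times> (nat \<Rightarrow> int)) set" where
  "pm1_assignments n = {(a, b). (\<forall>i j. 1 \<le> i \<and> i < j \<and> j \<le> n \<longrightarrow> a i j \<in> {-1, 1})
                              \<and> (\<forall>i. 1 \<le> i \<and> i \<le> n \<longrightarrow> b i \<in> {-1, 1})}"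

text \<open>Local hidden variable model: hidden variable l in a measure space M with
  probability density q; deterministic outcomes A l (i,j), B l k in {-1,1}.\<close>
definition lhv_model :: "'l measure \<Rightarrow> ('l \<Rightarrow> real) \<Rightarrow> ('l \<Rightarrow> nat \<times> nat \<Rightarrow> real)
    \<Rightarrow> ('l \<Rightarrow> nat \<Rightarrow> real) \<Rightarrow> bool" where
  "lhv_model M q A B \<longleftrightarrow>
     q \<in> borel_measurable M \<and> (\<forall>l\<in>space M. 0 \<le> q l) \<and> integrable M q \<and>
     (\<integral>l. q l \<partial>M) = 1 \<and>
     (\<forall>p. (\<lambda>l. A l p) \<in> borel_measurable M) \<and> (\<forall>k. (\<lambda>l. B l k) \<in> borel_measurable M) \<and>
     (\<forall>l\<in>space M. \<forall>p. A l p \<in> {-1, 1}) \<and> (\<forall>l\<in>space M. \<forall>k. B l k \<in> {-1, 1})"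

definition lhv_corr :: "'l measure \<Rightarrow> ('l \<Rightarrow> real) \<Rightarrow> ('l \<Rightarrow> nat \<times> nat \<Rightarrow> real)
    \<Rightarrow> ('l \<Rightarrow> nat \<Rightarrow> real) \<Rightarrow> nat \<times> nat \<Rightarrow> nat \<Rightarrow> real" where
  "lhv_corr M q A B p k = (\<integral>l. q l * A l p * B l k \<partial>M)"

text \<open>LHV value of B_Zn: each product a_ij b_k replaced by the LHV correlation.\<close>
definition BZ_lhv :: "nat \<Rightarrow> 'l measure \<Rightarrow> ('l \<Rightarrow> real) \<Rightarrow> ('l \<Rightarrow> nat \<times> nat \<Rightarrow> real)
    \<Rightarrow> ('l \<Rightarrow> nat \<Rightarrow> real) \<Rightarrow> real" where
  "BZ_lhv n M q A B = (\<Sum>i=1..n. \<Sum>j=i+1..n. lhv_corr M q A B (i,j) i - lhv_corr M q A B (i,j) j)"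

end

theory Submission imports Defs begin

definition T :: "nat \<Rightarrow> (nat \<Rightarrow> int) \<Rightarrow> int" where
  "T n b = (\<Sum>i=1..n. \<Sum>j=i+1..n. 1 - b i * b j)"

lemma sum_split_last:
  "(\<Sum>i=1..Suc n. \<Sum>j=i+1..Suc n. g i j) = (\<Sum>i=1..n. \<Sum>j=i+1..n. g i j) + (\<Sum>i=1..n. g i (Suc n))"
proof -
  have "(\<Sum>i=1..Suc n. \<Sum>j=i+1..Suc n. g i j) = (\<Sum>i=1..n. \<Sum>j=i+1..Suc n. g i j)"
    by (simp add: sum.cl_ivl_Suc)
  also have "\<dots> = (\<Sum>i=1..n. (\<Sum>j=i+1..n. g i j) + g i (Suc n))"
    by (rule sum.cong) (auto simp: sum.cl_ivl_Suc)
  finally show ?thesis by (simp add: sum.distrib)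
qed

lemma T_eq:
  assumes "\<forall>i. 1 \<le> i \<and> i \<le> n \<longrightarrow> b i \<in> {-1, 1}"
  shows "2 * T n b = int n ^ 2 - (\<Sum>i=1..n. b i) ^ 2"
  using assms
proof (induction n)
  case 0 then show ?case by (simp add: T_def)
next
  case (Suc n)
  have IH: "2 * T n b = int n ^ 2 - (\<Sum>i=1..n. b i) ^ 2" using Suc by auto
  have bb: "b (Suc n) * b (Suc n) = 1" using Suc.prems by auto
  have "T (Suc n) b = T n b + (\<Sum>i=1..n. 1 - b i * b (Suc n))"
    unfolding T_def by (rule sum_split_last)
  also have "(\<Sum>i=1..n. 1 - b i * b (Suc n)) = int n - (\<Sum>i=1..n. b i) * b (Suc n)"
    by (simp add: sum_subtractf sum_distrib_right)
  finally have "2 * T (Suc n) b = int n ^ 2 - (\<Sum>i=1..n. b i) ^ 2 + 2 * int n - 2 * (\<Sum>i=1..n. b i) * b (Suc n)"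
    using IH by (simp add: algebra_simps)
  moreover have "(\<Sum>i=1..Suc n. b i) = (\<Sum>i=1..n. b i) + b (Suc n)" by simp
  ultimately show ?case using bb by (simp add: power2_eq_square algebra_simps)
qed

lemma BZ_le_T:
  assumes "(a, b) \<in> pm1_assignments n"
  shows "BZ n a b \<le> T n b"
  unfolding BZ_def T_def
proof (rule sum_mono, rule sum_mono)
  fix i j assume i: "i \<in> {1..n}" and j: "j \<in> {i+1..n}"
  have "a i j \<in> {-1,1}" "b i \<in> {-1,1}" "b j \<in> {-1,1}" using assms i j by (auto simp: pm1_assignments_def)
  then show "a i j * (b i - b j) \<le> 1 - b i * b j" by auto
qed

lemma BZ_upper:
  assumes "(a, b) \<in> pm1_assignments n"
  shows "BZ n a b \<le> int (n^2) div 2"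
proof -
  have "2 * BZ n a b \<le> int n ^ 2"
    using BZ_le_T[OF assms] T_eq[of n b] assms
    by (auto simp: pm1_assignments_def) (smt (verit) zero_le_power2)
  then show ?thesis by simp
qed

lemma BZ_neg: "BZ n (\<lambda>i j. - a i j) b = - BZ n a b"
  by (simp add: BZ_def sum_negf)

lemma BZ_lower:
  assumes "(a, b) \<in> pm1_assignments n"
  shows "- (int (n^2) div 2) \<le> BZ n a b"
proof -
  have "((\<lambda>i j. - a i j), b) \<in> pm1_assignments n" using assms by (auto simp: pm1_assignments_def)
  from BZ_upper[OF this] show ?thesis by (simp add: BZ_neg)
qed

lemma sum_sign: "(\<Sum>i=1..n. (if i \<le> m then 1 else -1) :: int) = 2 * int (min m n) - int n"
  by (induction n) auto

lemma attain:
  assumes "n \<ge> 2"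
  shows "\<exists>(a,b)\<in>pm1_assignments n. BZ n a b = int (n^2) div 2"
proof -
  define m where "m = n div 2"
  define b :: "nat \<Rightarrow> int" where "b i = (if i \<le> m then 1 else -1)" for i
  define a :: "nat \<Rightarrow> nat \<Rightarrow> int" where "a i j = (if b i = b j then 1 else b i)" for i j
  have mem: "(a, b) \<in> pm1_assignments n" by (auto simp: pm1_assignments_def a_def b_def)
  have "BZ n a b = T n b" unfolding BZ_def T_def
    by (intro sum.cong refl) (auto simp: a_def b_def)
  moreover have "2 * T n b = int n ^ 2 - (2 * int m - int n) ^ 2"
    using T_eq[of n b] sum_sign[where n=n and m=m] by (auto simp: b_def m_def)
  moreover have "(2 * int m - int n) ^ 2 = int n mod 2"
    unfolding m_def by (cases "even n") (auto elim!: evenE oddE simp: power2_eq_square)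
  moreover have "int (n^2) div 2 * 2 + int (n^2) mod 2 = int (n^2)" by simp
  moreover have "int (n^2) mod 2 = int n mod 2"
  proof -
    have "n^2 mod 2 = n mod 2"
      by (simp add: power2_eq_square mod_mult_eq[symmetric] mod2_eq_if)
    then show ?thesis by (metis of_nat_mod of_nat_numeral)
  qed
  ultimately have "BZ n a b = int (n^2) div 2" by simp
  with mem show ?thesis by blast
qed

lemma floor_eq: "\<lfloor>real (n^2) / 2\<rfloor> = int (n^2) div 2"
  by (metis floor_divide_of_int_eq of_int_of_nat_eq of_int_numeral)

lemma pointwise:
  assumes A: "\<forall>p. A p \<in> {-1, 1::real}" and B: "\<forall>k. B k \<in> {-1, 1::real}"
  shows "(\<Sum>i=1..n. \<Sum>j=i+1..n. A (i,j) * (B i - B j)) \<le> real_of_int (int (n^2) div 2)"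
proof -
  define a :: "nat \<Rightarrow> nat \<Rightarrow> int" where "a i j = (if A (i,j) = 1 then 1 else -1)" for i j
  define b :: "nat \<Rightarrow> int" where "b k = (if B k = 1 then 1 else -1)" for k
  have Aa: "A (i,j) = of_int (a i j)" for i j using A[rule_format, of "(i,j)"] by (auto simp: a_def)
  have Bb: "B k = of_int (b k)" for k using B[rule_format, of k] by (auto simp: b_def)
  have mem: "(a, b) \<in> pm1_assignments n" by (auto simp: pm1_assignments_def a_def b_def)
  have "(\<Sum>i=1..n. \<Sum>j=i+1..n. A (i,j) * (B i - B j)) = of_int (BZ n a b)"
    by (simp add: BZ_def Aa Bb)
  with BZ_upper[OF mem] show ?thesis by simp
qed

theorem mainTheorem7:
  fixes n :: nat
  assumes "n \<ge> 2"
  shows "Max ((\<lambda>(a, b). BZ n a b) ` pm1_assignments n) = \<lfloor>real (n^2) / 2\<rfloor>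
         \<and> (\<forall>(M :: 'l measure) q A B. lhv_model M q A B \<longrightarrow>
               BZ_lhv n M q A B \<le> of_int \<lfloor>real (n^2) / 2\<rfloor>)"
proof
  let ?S = "(\<lambda>(a, b). BZ n a b) ` pm1_assignments n"
  have fin: "finite ?S"
  proof (rule finite_subset)
    show "?S \<subseteq> {- (int (n^2) div 2) .. int (n^2) div 2}"
      using BZ_upper BZ_lower by fastforce
  qed simp
  obtain a b where ab: "(a,b) \<in> pm1_assignments n" "BZ n a b = int (n^2) div 2"
    using attain[OF assms] by blast
  show "Max ?S = \<lfloor>real (n^2) / 2\<rfloor>"
    unfolding floor_eq
  proof (rule Max_eqI[OF fin])
    show "y \<le> int (n^2) div 2" if "y \<in> ?S" for y using that BZ_upper by auto
    show "int (n^2) div 2 \<in> ?S" using ab by force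
  qed
  show "\<forall>(M :: 'l measure) q A B. lhv_model M q A B \<longrightarrow>
               BZ_lhv n M q A B \<le> of_int \<lfloor>real (n^2) / 2\<rfloor>"
  proof (intro allI impI)
    fix M :: "'l measure" and q A B
    assume h: "lhv_model M q A B"
    let ?c = "real_of_int (int (n^2) div 2)"
    have qm: "q \<in> borel_measurable M" and q0: "\<forall>l\<in>space M. 0 \<le> q l" and qi: "integrable M q"
      and q1: "(\<integral>l. q l \<partial>M) = 1"
      and Am: "\<And>p. (\<lambda>l. A l p) \<in> borel_measurable M" and Bm: "\<And>k. (\<lambda>l. B l k) \<in> borel_measurable M"
      and Av: "\<forall>l\<in>space M. \<forall>p. A l p \<in> {-1, 1}" and Bv: "\<forall>l\<in>space M. \<forall>k. B l k \<in> {-1, 1}"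
      using h unfolding lhv_model_def by auto
    have int: "integrable M (\<lambda>l. q l * A l p * B l k)" for p k
    proof (rule Bochner_Integration.integrable_bound[OF qi])
      show "(\<lambda>l. q l * A l p * B l k) \<in> borel_measurable M" using qm Am Bm by measurable
      show "AE x in M. norm (q x * A x p * B x k) \<le> norm (q x)"
      proof (rule AE_I2)
        fix x assume x: "x \<in> space M"
        have "A x p \<in> {-1,1}" "B x k \<in> {-1,1}" using Av Bv x by blast+
        then have "\<bar>A x p\<bar> = 1" "\<bar>B x k\<bar> = 1" by auto
        then show "norm (q x * A x p * B x k) \<le> norm (q x)" by (simp add: abs_mult)
      qed
    qed
    define F where "F l = (\<Sum>i=1..n. \<Sum>j=i+1..n. q l * A l (i,j) * B l i - q l * A l (i,j) * B l j)" for l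
    have intF: "integrable M F" unfolding F_def using int by auto
    have "BZ_lhv n M q A B = (\<integral>l. F l \<partial>M)"
      unfolding BZ_lhv_def lhv_corr_def F_def
      using int by (simp add: Bochner_Integration.integral_sum Bochner_Integration.integral_diff)
    also have "\<dots> \<le> (\<integral>l. q l * ?c \<partial>M)"
    proof (rule integral_mono[OF intF])
      show "integrable M (\<lambda>l. q l * ?c)" using qi by simp
      fix l assume l: "l \<in> space M"
      have "F l = q l * (\<Sum>i=1..n. \<Sum>j=i+1..n. A l (i,j) * (B l i - B l j))"
        unfolding F_def by (simp add: sum_distrib_left algebra_simps)
      also have "\<dots> \<le> q l * ?c"
        using pointwise[of "A l" "B l" n] Av Bv l q0 by (intro mult_left_mono) auto
      finally show "F l \<le> q l * ?c" .
    qed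
    also have "\<dots> = ?c" using q1 by simp
    finally show "BZ_lhv n M q A B \<le> of_int \<lfloor>real (n^2) / 2\<rfloor>" unfolding floor_eq .
  qed
qed

end
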